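(* Let $T\subseteq V_n$ with $|T|$ even, and let $V_n = U_1\cup U_2$ be a partition with $|T\cap U_1|$ and $|T\cap U_2|$ odd. Fix $t_1\in T\cap U_1$, $t_2\in T\cap U_2$, and set $V_i := U_i\setminus\{t_i\}$, $T_i := (T\cap U_i)\setminus\{t_i\}$ for $i=1,2$, and $F := (V_1:V_2)\cup(V_1:\{t_1,t_2\})\cup(V_2:\{t_1,t_2\})$. Then $$Q := \{x\in \operatorname{dom}(P_{T\text{-join}}(n)) : x(U_1:U_2)=1,\ x_e=0\ \forall e\in F\}$$ is a face of $\{x\in \operatorname{dom}(P_{T\text{-join}}(n)) : x(U_1:U_2)=1\}$ and equals the set of $x\in\mathbb{R}^{E_n}_+$ with $x_{\{t_1,t_2\}}=1$, $x_e=0$ for all $e\in F$, and $x(S_i:(V_i\setminus S_i))\ge 1$ for all $i\in\{1,2\}$ and all $S_i\subseteq V_i$ with $|T_i\cap S_i|$ odd. Consequently $Q$ is (up to coordinate permutation) the Cartesian product of the $T_1$-join polyhedron of the complete graph on $V_1$, the $T_2$-join polyhedron of the complete graph on $V_2$, and a single point.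
   Context: $K_n=(V_n,E_n)$ is the complete graph on $n$ nodes. For $A,B\subseteq V_n$, $A:B := \{\{a,b\} : a\in A, b\in B\}$, and $x(F')=\sum_{e\in F'}x_e$. For $T\subseteq V_n$ with $|T|$ even, a $T$-join is a set $J\subseteq E_n$ such that a node has odd degree in $(V_n,J)$ iff it lies in $T$; $P_{T\text{-join}}(n)$ is the convex hull of characteristic vectors of $T$-joins and $\operatorname{dom}(P_{T\text{-join}}(n)) = P_{T\text{-join}}(n)+\mathbb{R}^{E_n}_+ = \{x\in\mathbb{R}^{E_n}_+ : x(\delta(S))\ge 1 \text{ for all } S\subseteq V_n \text{ with } |S\cap T| \text{ odd}\}$, where $\delta(S)=S:(V_n\setminus S)$. The $T'$-join polyhedron of a complete graph on a node set $W$ with $T'\subseteq W$ is defined analogously. *)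

theory Defs
  imports "HOL-Analysis.Analysis"
begin

text \<open>Nodes of K_n are 0..n-1; an edge is a 2-element set of nodes.
  A vector in R^{E} is a function x :: nat set => real which vanishes outside E.\<close>

definition nodes :: "nat \<Rightarrow> nat set" where
  "nodes n = {0..<n}"

definition edges :: "nat set \<Rightarrow> nat set set" where
  "edges W = {{a, b} | a b. a \<in> W \<and> b \<in> W \<and> a \<noteq> b}"

definition ecut :: "nat set \<Rightarrow> nat set \<Rightarrow> nat set set" where
  "ecut A B = {{a, b} | a b. a \<in> A \<and> b \<in> B \<and> a \<noteq> b}"

definition xsum :: "(nat set \<Rightarrow> real) \<Rightarrow> nat set set \<Rightarrow> real" where
  "xsum x F = (\<Sum>e\<in>F. x e)"

definition delta :: "nat set \<Rightarrow> nat set \<Rightarrow> nat set set" where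
  "delta W S = ecut S (W - S)"

definition vecs :: "nat set \<Rightarrow> (nat set \<Rightarrow> real) set" where
  "vecs W = {x. \<forall>e. e \<notin> edges W \<longrightarrow> x e = 0}"

text \<open>The dominant of the T-join polytope of the complete graph on W,
  via its inequality description (as given in the context).\<close>
definition dom_Tjoin :: "nat set \<Rightarrow> nat set \<Rightarrow> (nat set \<Rightarrow> real) set" where
  "dom_Tjoin W T = {x \<in> vecs W. (\<forall>e\<in>edges W. x e \<ge> 0) \<and>
      (\<forall>S. S \<subseteq> W \<and> odd (card (S \<inter> T)) \<longrightarrow> xsum x (delta W S) \<ge> 1)}"

definition is_face :: "nat set set \<Rightarrow> (nat set \<Rightarrow> real) set \<Rightarrow> (nat set \<Rightarrow> real) set \<Rightarrow> bool" where
  "is_face E F P \<longleftrightarrow> (\<exists>c d. (\<forall>x\<in>P. (\<Sum>e\<in>E. c e * x e) \<ge> d) \<and>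
      F = {x \<in> P. (\<Sum>e\<in>E. c e * x e) = d})"

definition Fset :: "nat set \<Rightarrow> nat set \<Rightarrow> nat \<Rightarrow> nat \<Rightarrow> nat set set" where
  "Fset U1 U2 t1 t2 = ecut (U1 - {t1}) (U2 - {t2}) \<union> ecut (U1 - {t1}) {t1, t2}
      \<union> ecut (U2 - {t2}) {t1, t2}"

end

theory Submission
  imports Defs
begin

lemma ecut_mem: "e \<in> ecut A B \<longleftrightarrow> (\<exists>a b. e = {a,b} \<and> a\<in>A \<and> b\<in>B \<and> a\<noteq>b)"
  by (auto simp: ecut_def)

lemma edges_mem: "e \<in> edges W \<longleftrightarrow> (\<exists>a b. e = {a,b} \<and> a\<in>W \<and> b\<in>W \<and> a\<noteq>b)"
  by (auto simp: edges_def)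

lemma finite_ecut: "finite A \<Longrightarrow> finite B \<Longrightarrow> finite (ecut A B)"
proof -
  assume "finite A" "finite B"
  have "ecut A B \<subseteq> Pow (A \<union> B)" by (auto simp: ecut_def)
  thus ?thesis using \<open>finite A\<close> \<open>finite B\<close> by (meson finite_Pow_iff finite_UnI finite_subset)
qed

lemma finite_edges: "finite W \<Longrightarrow> finite (edges W)"
proof -
  assume "finite W"
  have "edges W \<subseteq> Pow W" by (auto simp: edges_def)
  thus ?thesis using \<open>finite W\<close> by (meson finite_Pow_iff finite_subset)
qed

lemma ecut_sub_edges: "A \<subseteq> W \<Longrightarrow> B \<subseteq> W \<Longrightarrow> ecut A B \<subseteq> edges W"
  by (auto simp: ecut_def edges_def)

lemma xsum_mono:
  assumes "finite G" "H \<subseteq> G" "\<forall>e\<in>G. x e \<ge> 0"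
  shows "xsum x H \<le> xsum x G"
  unfolding xsum_def using assms by (intro sum_mono2) auto

lemma xsum_eq_sub:
  assumes "finite G" "H \<subseteq> G" "\<forall>e\<in>G - H. x e = 0"
  shows "xsum x H = xsum x G"
  unfolding xsum_def using assms by (intro sum.mono_neutral_left) auto

lemma ecut_mono: "A \<subseteq> A' \<Longrightarrow> B \<subseteq> B' \<Longrightarrow> ecut A B \<subseteq> ecut A' B'"
  by (auto simp: ecut_def)

lemma edges_mono: "A \<subseteq> A' \<Longrightarrow> edges A \<subseteq> edges A'"
  by (auto simp: edges_def)

lemma edges_sub: "e \<in> edges W \<Longrightarrow> e \<subseteq> W \<and> e \<noteq> {}"
  by (auto simp: edges_def)

theorem mainTheorem9:
  fixes n :: nat and T U1 U2 :: "nat set" and t1 t2 :: nat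
  assumes "T \<subseteq> nodes n" and "even (card T)"
    and "U1 \<union> U2 = nodes n" and "U1 \<inter> U2 = {}"
    and "odd (card (T \<inter> U1))" and "odd (card (T \<inter> U2))"
    and "t1 \<in> T \<inter> U1" and "t2 \<in> T \<inter> U2"
  defines "V1 \<equiv> U1 - {t1}" and "V2 \<equiv> U2 - {t2}"
    and "T1 \<equiv> (T \<inter> U1) - {t1}" and "T2 \<equiv> (T \<inter> U2) - {t2}"
    and "P \<equiv> {x \<in> dom_Tjoin (nodes n) T. xsum x (ecut U1 U2) = 1}"
    and "Q \<equiv> {x \<in> dom_Tjoin (nodes n) T. xsum x (ecut U1 U2) = 1 \<and> (\<forall>e\<in>Fset U1 U2 t1 t2. x e = 0)}"
  shows "is_face (edges (nodes n)) Q P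
    \<and> Q = {x \<in> vecs (nodes n). (\<forall>e\<in>edges (nodes n). x e \<ge> 0) \<and> x {t1, t2} = 1
            \<and> (\<forall>e\<in>Fset U1 U2 t1 t2. x e = 0)
            \<and> (\<forall>S1. S1 \<subseteq> V1 \<and> odd (card (T1 \<inter> S1)) \<longrightarrow> xsum x (ecut S1 (V1 - S1)) \<ge> 1)
            \<and> (\<forall>S2. S2 \<subseteq> V2 \<and> odd (card (T2 \<inter> S2)) \<longrightarrow> xsum x (ecut S2 (V2 - S2)) \<ge> 1)}
    \<and> Q = (\<lambda>(y1, y2). (\<lambda>e. y1 e + y2 e + (if e = {t1, t2} then 1 else 0)))
            ` (dom_Tjoin V1 T1 \<times> dom_Tjoin V2 T2)
    \<and> inj_on (\<lambda>(y1, y2). (\<lambda>e. y1 e + y2 e + (if e = {t1, t2} then 1 else 0)))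
            (dom_Tjoin V1 T1 \<times> dom_Tjoin V2 T2)"
proof -
  define N where "N = nodes n"
  define E where "E = edges N"
  define F where "F = Fset U1 U2 t1 t2"
  define R where "R = {x \<in> vecs N. (\<forall>e\<in>E. x e \<ge> 0) \<and> x {t1, t2} = 1
            \<and> (\<forall>e\<in>F. x e = 0)
            \<and> (\<forall>S1. S1 \<subseteq> V1 \<and> odd (card (T1 \<inter> S1)) \<longrightarrow> xsum x (ecut S1 (V1 - S1)) \<ge> 1)
            \<and> (\<forall>S2. S2 \<subseteq> V2 \<and> odd (card (T2 \<inter> S2)) \<longrightarrow> xsum x (ecut S2 (V2 - S2)) \<ge> 1)}"
  define g where "g = (\<lambda>(y1, y2). (\<lambda>e. y1 (e::nat set) + y2 e + (if e = {t1, t2} then (1::real) else 0)))"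
  have finN: "finite N" by (simp add: N_def nodes_def)
  have t12: "t1 \<noteq> t2" using assms(4,7,8) by blast
  have tN: "t1 \<in> N" "t2 \<in> N" using assms(3,7,8) N_def by auto
  have V1N: "V1 \<subseteq> N" and V2N: "V2 \<subseteq> N" using assms(3) N_def V1_def V2_def by auto
  have tV: "t1 \<notin> V1" "t2 \<notin> V2" "t1 \<notin> V2" "t2 \<notin> V1"
    using assms(4,7,8) V1_def V2_def by auto
  have V12: "V1 \<inter> V2 = {}" using assms(4) V1_def V2_def by auto
  have Nsplit: "N = V1 \<union> V2 \<union> {t1,t2}" using assms(3,7,8) N_def V1_def V2_def by auto
  have T1eq: "T1 = T \<inter> V1" using T1_def V1_def by auto
  have T2eq: "T2 = T \<inter> V2" using T2_def V2_def by auto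
  have finE: "finite E" using finN E_def finite_edges by auto
  have Fmem: "e \<in> F \<longleftrightarrow> (\<exists>a b. e = {a,b} \<and> a \<noteq> b \<and> ((a\<in>V1 \<and> b\<in>V2) \<or> (a\<in>V1 \<and> (b=t1 \<or> b=t2))
      \<or> (a\<in>V2 \<and> (b=t1 \<or> b=t2))))" for e
    unfolding F_def Fset_def V1_def[symmetric] V2_def[symmetric] Un_iff ecut_mem by blast
  have Fprop: "\<not> e \<subseteq> V1 \<and> \<not> e \<subseteq> V2 \<and> e \<inter> (V1 \<union> V2) \<noteq> {}" if "e \<in> F" for e
    using that tV V12 unfolding Fmem by auto
  have FE: "F \<subseteq> E"
  proof
    fix e assume "e \<in> F"
    then show "e \<in> E" unfolding Fmem E_def edges_mem using V1N V2N tN by blast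
  qed
  have finF: "finite F" using FE finE finite_subset by blast
  have ttE: "{t1,t2} \<in> E" using tN t12 unfolding E_def edges_mem by blast
  have ttU: "{t1,t2} \<in> ecut U1 U2" using assms(7,8) t12 unfolding ecut_mem by blast
  have d1: "e \<notin> edges V2" if "e \<in> edges V1" for e
    using that edges_sub V12 by blast
  have d1': "e \<notin> edges V1" if "e \<in> edges V2" for e
    using that d1 by blast
  have d2: "{t1,t2} \<notin> edges V1" using edges_sub tV by blast
  have d3: "{t1,t2} \<notin> edges V2" using edges_sub tV by blast
  have d4: "e \<notin> F" if "e \<in> edges V1" for e using that edges_sub Fprop by blast
  have d5: "e \<notin> F" if "e \<in> edges V2" for e using that edges_sub Fprop by blast
  have d6: "{t1,t2} \<notin> F" using Fprop tV by blast
  have E1: "edges V1 \<subseteq> E" "edges V2 \<subseteq> E" using edges_mono V1N V2N E_def by auto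
  have classify: "e \<in> edges V1 \<or> e \<in> edges V2 \<or> e = {t1,t2} \<or> e \<in> F" if eE: "e \<in> E" for e
  proof -
    obtain a b where e: "e = {a,b}" "a \<in> N" "b \<in> N" "a \<noteq> b"
      using eE unfolding E_def edges_mem by blast
    have a: "a\<in>V1 \<or> a\<in>V2 \<or> a=t1 \<or> a=t2" and b: "b\<in>V1 \<or> b\<in>V2 \<or> b=t1 \<or> b=t2"
      using e Nsplit by auto
    show ?thesis using a b e unfolding edges_mem Fmem by (metis insert_commute)
  qed
  have key1: "xsum x (ecut U1 U2) = x {t1,t2}" if "\<forall>e\<in>F. x e = 0" for x
  proof -
    have "xsum x {{t1,t2}} = xsum x (ecut U1 U2)"
    proof (rule xsum_eq_sub)
      show "finite (ecut U1 U2)" using assms(3) finN N_def finite_ecut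
        by (metis finite_Un)
      show "{{t1, t2}} \<subseteq> ecut U1 U2" using ttU by auto
      show "\<forall>e\<in>ecut U1 U2 - {{t1, t2}}. x e = 0"
      proof
        fix e assume "e \<in> ecut U1 U2 - {{t1, t2}}"
        then obtain a b where e: "e = {a,b}" "a \<in> U1" "b \<in> U2" "a \<noteq> b" "e \<noteq> {t1,t2}"
          unfolding Diff_iff singleton_iff ecut_mem by blast
        have "e \<in> F"
        proof (cases "a = t1")
          case True
          then have "b \<in> V2" using e V2_def by auto
          then show ?thesis unfolding Fmem using e True by (metis insert_commute)
        next
          case False
          then have "a \<in> V1" using e V1_def by auto
          moreover have "b \<in> V2 \<or> b = t2" using e V2_def by auto
          ultimately show ?thesis unfolding Fmem using e by metis
        qed
        then show "x e = 0" using that by blast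
      qed
    qed
    then show ?thesis by (simp add: xsum_def)
  qed
  have key2a: "xsum x (delta N S1) = xsum x (ecut S1 (V1 - S1))"
    if "\<forall>e\<in>F. x e = 0" "S1 \<subseteq> V1" for x S1
  proof (rule xsum_eq_sub[symmetric])
    show "finite (delta N S1)" unfolding delta_def using finN that(2) V1N
      by (meson finite_Diff finite_ecut finite_subset)
    show "ecut S1 (V1 - S1) \<subseteq> delta N S1" unfolding delta_def using V1N
      by (intro ecut_mono) auto
    show "\<forall>e\<in>delta N S1 - ecut S1 (V1 - S1). x e = 0"
    proof
      fix e assume "e \<in> delta N S1 - ecut S1 (V1 - S1)"
      then obtain a b where e: "e = {a,b}" "a \<in> S1" "b \<in> N - S1" "a \<noteq> b" "b \<notin> V1 - S1"
        unfolding delta_def Diff_iff ecut_mem by blast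
      have "b \<in> V2 \<or> b = t1 \<or> b = t2" using e Nsplit by auto
      then have "e \<in> F" unfolding Fmem using e that(2) by blast
      then show "x e = 0" using that by blast
    qed
  qed
  have key2b: "xsum x (delta N S2) = xsum x (ecut S2 (V2 - S2))"
    if "\<forall>e\<in>F. x e = 0" "S2 \<subseteq> V2" for x S2
  proof (rule xsum_eq_sub[symmetric])
    show "finite (delta N S2)" unfolding delta_def using finN that(2) V2N
      by (meson finite_Diff finite_ecut finite_subset)
    show "ecut S2 (V2 - S2) \<subseteq> delta N S2" unfolding delta_def using V2N
      by (intro ecut_mono) auto
    show "\<forall>e\<in>delta N S2 - ecut S2 (V2 - S2). x e = 0"
    proof
      fix e assume "e \<in> delta N S2 - ecut S2 (V2 - S2)"
      then obtain a b where e: "e = {a,b}" "a \<in> S2" "b \<in> N - S2" "a \<noteq> b" "b \<notin> V2 - S2"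
        unfolding delta_def Diff_iff ecut_mem by blast
      have "b \<in> V1 \<or> b = t1 \<or> b = t2" using e Nsplit by auto
      then have "e \<in> F" unfolding Fmem using e that(2) by (metis insert_commute subsetD)
      then show "x e = 0" using that by blast
    qed
  qed
  have key3: "xsum x (delta N S) \<ge> 1"
    if nn: "\<forall>e\<in>E. x e \<ge> 0" and x1: "x {t1,t2} = 1"
      and c1: "\<forall>S1. S1 \<subseteq> V1 \<and> odd (card (T1 \<inter> S1)) \<longrightarrow> xsum x (ecut S1 (V1 - S1)) \<ge> 1"
      and c2: "\<forall>S2. S2 \<subseteq> V2 \<and> odd (card (T2 \<inter> S2)) \<longrightarrow> xsum x (ecut S2 (V2 - S2)) \<ge> 1"
      and S: "S \<subseteq> N" "odd (card (S \<inter> T))" for x S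
  proof -
    have finG: "finite (delta N S)" unfolding delta_def using finN S(1)
      by (meson finite_Diff finite_ecut finite_subset)
    have GE: "delta N S \<subseteq> E" unfolding delta_def E_def using S(1) by (intro ecut_sub_edges) auto
    have nnG: "\<forall>e\<in>delta N S. x e \<ge> 0" using nn GE by blast
    show ?thesis
    proof (cases "t1 \<in> S \<longleftrightarrow> t2 \<notin> S")
      case True
      have "{t1,t2} \<in> delta N S"
      proof (cases "t1 \<in> S")
        case True
        then show ?thesis using \<open>t1 \<in> S \<longleftrightarrow> t2 \<notin> S\<close> tN t12 unfolding delta_def ecut_mem by blast
      next
        case False
        then have "t2 \<in> S" using \<open>t1 \<in> S \<longleftrightarrow> t2 \<notin> S\<close> by blast
        then show ?thesis using False tN t12 unfolding delta_def ecut_mem by (metis DiffI insert_commute)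
      qed
      then have "xsum x {{t1,t2}} \<le> xsum x (delta N S)"
        by (intro xsum_mono[OF finG _ nnG]) auto
      then show ?thesis using x1 by (simp add: xsum_def)
    next
      case False
      have split: "S \<inter> T = (T1 \<inter> (S \<inter> V1)) \<union> (T2 \<inter> (S \<inter> V2)) \<union> (S \<inter> T \<inter> {t1,t2})"
        using assms(1) Nsplit N_def T1eq T2eq by auto
      have fin1: "finite (T1 \<inter> (S \<inter> V1))" "finite (T2 \<inter> (S \<inter> V2))" "finite (S \<inter> T \<inter> {t1,t2})"
        using finN V1N V2N by (auto intro: finite_subset)
      have "card (S \<inter> T) = card (T1 \<inter> (S \<inter> V1)) + card (T2 \<inter> (S \<inter> V2)) + card (S \<inter> T \<inter> {t1,t2})"
      proof -
        have "card ((T1 \<inter> (S \<inter> V1)) \<union> (T2 \<inter> (S \<inter> V2)) \<union> (S \<inter> T \<inter> {t1,t2}))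
          = card ((T1 \<inter> (S \<inter> V1)) \<union> (T2 \<inter> (S \<inter> V2))) + card (S \<inter> T \<inter> {t1,t2})"
          using fin1 tV by (intro card_Un_disjoint) auto
        also have "card ((T1 \<inter> (S \<inter> V1)) \<union> (T2 \<inter> (S \<inter> V2)))
          = card (T1 \<inter> (S \<inter> V1)) + card (T2 \<inter> (S \<inter> V2))"
          using fin1 V12 by (intro card_Un_disjoint) auto
        finally show ?thesis using split by simp
      qed
      moreover have "S \<inter> T \<inter> {t1,t2} = {} \<or> S \<inter> T \<inter> {t1,t2} = {t1,t2}"
        using False assms(7,8) by auto
      then have "even (card (S \<inter> T \<inter> {t1,t2}))" using t12 by auto
      ultimately have "odd (card (T1 \<inter> (S \<inter> V1))) \<or> odd (card (T2 \<inter> (S \<inter> V2)))"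
        using S(2) by auto
      then show ?thesis
      proof
        assume "odd (card (T1 \<inter> (S \<inter> V1)))"
        then have "xsum x (ecut (S \<inter> V1) (V1 - S \<inter> V1)) \<ge> 1" using c1 by blast
        moreover have "xsum x (ecut (S \<inter> V1) (V1 - S \<inter> V1)) \<le> xsum x (delta N S)"
          using V1N unfolding delta_def
          by (intro xsum_mono[OF finG[unfolded delta_def] _ nnG[unfolded delta_def]] ecut_mono) auto
        ultimately show ?thesis by linarith
      next
        assume "odd (card (T2 \<inter> (S \<inter> V2)))"
        then have "xsum x (ecut (S \<inter> V2) (V2 - S \<inter> V2)) \<ge> 1" using c2 by blast
        moreover have "xsum x (ecut (S \<inter> V2) (V2 - S \<inter> V2)) \<le> xsum x (delta N S)"
          using V2N unfolding delta_def
          by (intro xsum_mono[OF finG[unfolded delta_def] _ nnG[unfolded delta_def]] ecut_mono) auto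
        ultimately show ?thesis by linarith
      qed
    qed
  qed
  have QR: "Q = R"
  proof
    show "Q \<subseteq> R"
    proof
      fix x assume "x \<in> Q"
      then have x: "x \<in> vecs N" "\<forall>e\<in>E. x e \<ge> 0"
        "\<forall>S. S \<subseteq> N \<and> odd (card (S \<inter> T)) \<longrightarrow> xsum x (delta N S) \<ge> 1"
        "xsum x (ecut U1 U2) = 1" "\<forall>e\<in>F. x e = 0"
        unfolding Q_def dom_Tjoin_def N_def E_def F_def by auto
      have "x {t1,t2} = 1" using key1 x by simp
      moreover have "xsum x (ecut S1 (V1 - S1)) \<ge> 1" if "S1 \<subseteq> V1" "odd (card (T1 \<inter> S1))" for S1
      proof -
        have "S1 \<inter> T = T1 \<inter> S1" using that T1eq by auto
        then have "S1 \<subseteq> N \<and> odd (card (S1 \<inter> T))" using that V1N by auto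
        then have "xsum x (delta N S1) \<ge> 1" using x(3) by blast
        then show ?thesis using key2a[OF x(5) that(1)] by simp
      qed
      moreover have "xsum x (ecut S2 (V2 - S2)) \<ge> 1" if "S2 \<subseteq> V2" "odd (card (T2 \<inter> S2))" for S2
      proof -
        have "S2 \<inter> T = T2 \<inter> S2" using that T2eq by auto
        then have "S2 \<subseteq> N \<and> odd (card (S2 \<inter> T))" using that V2N by auto
        then have "xsum x (delta N S2) \<ge> 1" using x(3) by blast
        then show ?thesis using key2b[OF x(5) that(1)] by simp
      qed
      ultimately show "x \<in> R" unfolding R_def using x by blast
    qed
  next
    show "R \<subseteq> Q"
    proof
      fix x assume "x \<in> R"
      then have x: "x \<in> vecs N" "\<forall>e\<in>E. x e \<ge> 0" "x {t1,t2} = 1" "\<forall>e\<in>F. x e = 0"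
        "\<forall>S1. S1 \<subseteq> V1 \<and> odd (card (T1 \<inter> S1)) \<longrightarrow> xsum x (ecut S1 (V1 - S1)) \<ge> 1"
        "\<forall>S2. S2 \<subseteq> V2 \<and> odd (card (T2 \<inter> S2)) \<longrightarrow> xsum x (ecut S2 (V2 - S2)) \<ge> 1"
        unfolding R_def by auto
      have "x \<in> dom_Tjoin N T" unfolding dom_Tjoin_def
        using x key3[OF x(2,3,5,6)] E_def by auto
      moreover have "xsum x (ecut U1 U2) = 1" using key1 x by simp
      ultimately show "x \<in> Q" unfolding Q_def N_def F_def using x(4) F_def by auto
    qed
  qed
  have face: "is_face E Q P"
  proof -
    define c where "c = (\<lambda>e. if e \<in> F then (1::real) else 0)"
    have sc: "(\<Sum>e\<in>E. c e * x e) = sum x F" for x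
    proof -
      have "(\<Sum>e\<in>E. c e * x e) = (\<Sum>e\<in>E. if e \<in> F then x e else 0)"
        unfolding c_def by (intro sum.cong) auto
      also have "\<dots> = sum x (E \<inter> F)" using finE by (simp add: sum.inter_restrict)
      also have "E \<inter> F = F" using FE by blast
      finally show ?thesis .
    qed
    have nnP: "\<forall>e\<in>F. x e \<ge> 0" if "x \<in> P" for x
      using that FE unfolding P_def dom_Tjoin_def E_def N_def by auto
    show ?thesis unfolding is_face_def
    proof (intro exI conjI)
      show "\<forall>x\<in>P. (\<Sum>e\<in>E. c e * x e) \<ge> 0" using nnP sc by (simp add: sum_nonneg)
      show "Q = {x \<in> P. (\<Sum>e\<in>E. c e * x e) = 0}"
      proof -
        have iff: "sum x F = 0 \<longleftrightarrow> (\<forall>e\<in>F. x e = 0)" if "x \<in> P" for x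
          using sum_nonneg_eq_0_iff[OF finF] nnP[OF that] by blast
        show ?thesis unfolding sc
        proof (intro equalityI subsetI)
          fix x assume "x \<in> Q"
          then have "x \<in> P" "\<forall>e\<in>F. x e = 0" unfolding Q_def P_def F_def by auto
          then show "x \<in> {x \<in> P. sum x F = 0}" using iff by blast
        next
          fix x assume "x \<in> {x \<in> P. sum x F = 0}"
          then have "x \<in> P" "\<forall>e\<in>F. x e = 0" using iff by auto
          then show "x \<in> Q" unfolding Q_def P_def F_def by auto
        qed
      qed
    qed
  qed
  have gR: "g (y1, y2) \<in> R" if y: "y1 \<in> dom_Tjoin V1 T1" "y2 \<in> dom_Tjoin V2 T2" for y1 y2
  proof -
    have y1: "\<forall>e. e \<notin> edges V1 \<longrightarrow> y1 e = 0" "\<forall>e\<in>edges V1. y1 e \<ge> 0"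
      "\<forall>S. S \<subseteq> V1 \<and> odd (card (S \<inter> T1)) \<longrightarrow> xsum y1 (delta V1 S) \<ge> 1"
      using y(1) unfolding dom_Tjoin_def vecs_def by auto
    have y2: "\<forall>e. e \<notin> edges V2 \<longrightarrow> y2 e = 0" "\<forall>e\<in>edges V2. y2 e \<ge> 0"
      "\<forall>S. S \<subseteq> V2 \<and> odd (card (S \<inter> T2)) \<longrightarrow> xsum y2 (delta V2 S) \<ge> 1"
      using y(2) unfolding dom_Tjoin_def vecs_def by auto
    let ?x = "g (y1, y2)"
    have gv: "?x e = y1 e + y2 e + (if e = {t1, t2} then 1 else 0)" for e
      unfolding g_def by simp
    have "?x \<in> vecs N" unfolding vecs_def
    proof (intro CollectI allI impI)
      fix e assume "e \<notin> edges N"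
      then have "e \<notin> edges V1" "e \<notin> edges V2" "e \<noteq> {t1,t2}" using E1 ttE E_def by auto
      then show "?x e = 0" using gv y1 y2 by simp
    qed
    moreover have "\<forall>e\<in>E. ?x e \<ge> 0"
    proof
      fix e assume "e \<in> E"
      have "y1 e \<ge> 0" using y1 by (cases "e \<in> edges V1") auto
      moreover have "y2 e \<ge> 0" using y2 by (cases "e \<in> edges V2") auto
      ultimately show "?x e \<ge> 0" using gv by simp
    qed
    moreover have "?x {t1,t2} = 1" using gv y1 y2 d2 d3 by simp
    moreover have "\<forall>e\<in>F. ?x e = 0" using gv y1 y2 d4 d5 d6 by fastforce
    moreover have "xsum ?x (ecut S1 (V1 - S1)) \<ge> 1" if "S1 \<subseteq> V1" "odd (card (T1 \<inter> S1))" for S1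
    proof -
      have sub: "ecut S1 (V1 - S1) \<subseteq> edges V1" using that by (intro ecut_sub_edges) auto
      have "xsum ?x (ecut S1 (V1 - S1)) = xsum y1 (ecut S1 (V1 - S1))"
        unfolding xsum_def
      proof (intro sum.cong refl)
        fix e assume "e \<in> ecut S1 (V1 - S1)"
        then have "e \<in> edges V1" using sub by blast
        then show "?x e = y1 e" using gv y2 d1 d2 by auto
      qed
      moreover have "card (S1 \<inter> T1) = card (T1 \<inter> S1)" by (simp add: Int_commute)
      ultimately show ?thesis using y1(3) that unfolding delta_def by auto
    qed
    moreover have "xsum ?x (ecut S2 (V2 - S2)) \<ge> 1" if "S2 \<subseteq> V2" "odd (card (T2 \<inter> S2))" for S2
    proof -
      have sub: "ecut S2 (V2 - S2) \<subseteq> edges V2" using that by (intro ecut_sub_edges) auto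
      have "xsum ?x (ecut S2 (V2 - S2)) = xsum y2 (ecut S2 (V2 - S2))"
        unfolding xsum_def
      proof (intro sum.cong refl)
        fix e assume "e \<in> ecut S2 (V2 - S2)"
        then have "e \<in> edges V2" using sub by blast
        then have "e \<notin> edges V1" "e \<noteq> {t1,t2}" using d1' d3 by auto
        then show "?x e = y2 e" using gv y1 by simp
      qed
      moreover have "card (S2 \<inter> T2) = card (T2 \<inter> S2)" by (simp add: Int_commute)
      ultimately show ?thesis using y2(3) that unfolding delta_def by auto
    qed
    ultimately show ?thesis unfolding R_def by blast
  qed
  have Rg: "x \<in> g ` (dom_Tjoin V1 T1 \<times> dom_Tjoin V2 T2)" if "x \<in> R" for x
  proof -
    have x: "x \<in> vecs N" "\<forall>e\<in>E. x e \<ge> 0" "x {t1,t2} = 1" "\<forall>e\<in>F. x e = 0"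
      "\<forall>S1. S1 \<subseteq> V1 \<and> odd (card (T1 \<inter> S1)) \<longrightarrow> xsum x (ecut S1 (V1 - S1)) \<ge> 1"
      "\<forall>S2. S2 \<subseteq> V2 \<and> odd (card (T2 \<inter> S2)) \<longrightarrow> xsum x (ecut S2 (V2 - S2)) \<ge> 1"
      using that unfolding R_def by auto
    define y1 where "y1 = (\<lambda>e. if e \<in> edges V1 then x e else 0)"
    define y2 where "y2 = (\<lambda>e. if e \<in> edges V2 then x e else 0)"
    have "y1 \<in> dom_Tjoin V1 T1" unfolding dom_Tjoin_def vecs_def
    proof (intro CollectI conjI allI impI ballI)
      show "y1 e = 0" if "e \<notin> edges V1" for e using that y1_def by simp
      show "y1 e \<ge> 0" if "e \<in> edges V1" for e using that y1_def x(2) E1 by auto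
      fix S assume S: "S \<subseteq> V1 \<and> odd (card (S \<inter> T1))"
      have sub: "ecut S (V1 - S) \<subseteq> edges V1" using S by (intro ecut_sub_edges) auto
      have "xsum y1 (delta V1 S) = xsum x (ecut S (V1 - S))"
        unfolding xsum_def delta_def using sub y1_def by (intro sum.cong refl) auto
      moreover have "card (S \<inter> T1) = card (T1 \<inter> S)" by (simp add: Int_commute)
      ultimately show "xsum y1 (delta V1 S) \<ge> 1" using x(5) S by auto
    qed
    moreover have "y2 \<in> dom_Tjoin V2 T2" unfolding dom_Tjoin_def vecs_def
    proof (intro CollectI conjI allI impI ballI)
      show "y2 e = 0" if "e \<notin> edges V2" for e using that y2_def by simp
      show "y2 e \<ge> 0" if "e \<in> edges V2" for e using that y2_def x(2) E1 by auto
      fix S assume S: "S \<subseteq> V2 \<and> odd (card (S \<inter> T2))"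
      have sub: "ecut S (V2 - S) \<subseteq> edges V2" using S by (intro ecut_sub_edges) auto
      have "xsum y2 (delta V2 S) = xsum x (ecut S (V2 - S))"
        unfolding xsum_def delta_def using sub y2_def by (intro sum.cong refl) auto
      moreover have "card (S \<inter> T2) = card (T2 \<inter> S)" by (simp add: Int_commute)
      ultimately show "xsum y2 (delta V2 S) \<ge> 1" using x(6) S by auto
    qed
    moreover have "x = g (y1, y2)"
    proof
      fix e
      have gv: "g (y1, y2) e = y1 e + y2 e + (if e = {t1, t2} then 1 else 0)"
        unfolding g_def by simp
      show "x e = g (y1, y2) e"
      proof (cases "e \<in> E")
        case True
        then consider "e \<in> edges V1" | "e \<in> edges V2" | "e = {t1,t2}" | "e \<in> F"
          using classify by blast
        then show ?thesis
        proof cases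
          case 1 then show ?thesis using gv y1_def y2_def d1 d2 by auto
        next
          case 2 then show ?thesis using gv y1_def y2_def d1' d3 by auto
        next
          case 3 then show ?thesis using gv y1_def y2_def d2 d3 x(3) by auto
        next
          case 4 then show ?thesis using gv y1_def y2_def d4 d5 d6 x(4) by auto
        qed
      next
        case False
        then show ?thesis using gv y1_def y2_def E1 ttE x(1) unfolding vecs_def E_def by auto
      qed
    qed
    ultimately show ?thesis by blast
  qed
  have img: "R = g ` (dom_Tjoin V1 T1 \<times> dom_Tjoin V2 T2)"
    using gR Rg by auto
  have inj: "inj_on g (dom_Tjoin V1 T1 \<times> dom_Tjoin V2 T2)"
  proof (rule inj_onI, clarify)
    fix y1 y2 z1 z2
    assume y: "y1 \<in> dom_Tjoin V1 T1" "y2 \<in> dom_Tjoin V2 T2"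
      and z: "z1 \<in> dom_Tjoin V1 T1" "z2 \<in> dom_Tjoin V2 T2"
      and eq: "g (y1, y2) = g (z1, z2)"
    have v: "\<forall>e. e \<notin> edges V1 \<longrightarrow> y1 e = 0" "\<forall>e. e \<notin> edges V2 \<longrightarrow> y2 e = 0"
      "\<forall>e. e \<notin> edges V1 \<longrightarrow> z1 e = 0" "\<forall>e. e \<notin> edges V2 \<longrightarrow> z2 e = 0"
      using y z unfolding dom_Tjoin_def vecs_def by auto
    have eqe: "y1 e + y2 e = z1 e + z2 e" for e
      using fun_cong[OF eq, of e] unfolding g_def by simp
    have "y1 = z1"
    proof
      fix e show "y1 e = z1 e"
        using eqe[of e] v d1 by (cases "e \<in> edges V1") auto
    qed
    moreover have "y2 = z2"
    proof
      fix e show "y2 e = z2 e"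
        using eqe[of e] v d1' by (cases "e \<in> edges V2") auto
    qed
    ultimately show "y1 = z1 \<and> y2 = z2" by simp
  qed
  show ?thesis
    using face QR img inj unfolding E_def N_def F_def R_def g_def by simp
qed

end
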